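(* Let Alice hold a string $A$ and Bob hold a string $B$, and let $\ell=\mathrm{LCP}(A,B)$. Using a randomized public-coin protocol, they can find a number $\ell'\ge\ell$ such that either (1) $\ell'\le\ell^2$, using $O(\lg\lg\ell)$ rounds and $O(\lg\lg\ell)$ total communication, or (2) $\ell'\le|A|^2$, using $O(1)$ rounds and $O(\lg\lg\lg|A|)$ total communication.
   Context: $\mathrm{LCP}(A,B)$ is the length of the longest common prefix of $A$ and $B$. In the public-coin model the parties share an infinite string of independent unbiased random bits, and the result must be correct with probability at least a fixed constant greater than $1/2$. *)

theory Defs
  imports "HOL-Probability.Probability" "HOL-Library.Sublist"
begin

definition LCP :: "'a list \<Rightarrow> 'a list \<Rightarrow> nat" where
  "LCP A B = length (longest_common_prefix A B)"

definition coins :: "(nat \<Rightarrow> bool) measure" where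
  "coins = PiM UNIV (\<lambda>_::nat. measure_pmf (bernoulli_pmf (1/2)))"

text \<open>Message number i
  (counting from 0) is sent by Alice if i is even and by Bob if i is odd; the sender's
  message depends on his own input, the public coins and the transcript so far.
  Whether the protocol has halted, and its output, are functions of the public
  coins and the transcript (hence known to both parties).\<close>
record 'a protocol =
  msgA :: "'a list \<Rightarrow> (nat \<Rightarrow> bool) \<Rightarrow> bool list list \<Rightarrow> bool list"
  msgB :: "'a list \<Rightarrow> (nat \<Rightarrow> bool) \<Rightarrow> bool list list \<Rightarrow> bool list"
  halts :: "(nat \<Rightarrow> bool) \<Rightarrow> bool list list \<Rightarrow> bool"
  outp :: "(nat \<Rightarrow> bool) \<Rightarrow> bool list list \<Rightarrow> nat"

text \<open>Messages must be self-delimiting: in every situation the set of possible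
  messages is prefix-free.\<close>
definition prefix_free_protocol :: "'a protocol \<Rightarrow> bool" where
  "prefix_free_protocol P \<longleftrightarrow>
     (\<forall>r t X Y. \<not> strict_prefix (msgA P X r t) (msgA P Y r t)) \<and>
     (\<forall>r t X Y. \<not> strict_prefix (msgB P X r t) (msgB P Y r t))"

fun run :: "'a protocol \<Rightarrow> 'a list \<Rightarrow> 'a list \<Rightarrow> (nat \<Rightarrow> bool) \<Rightarrow> nat \<Rightarrow> bool list list" where
  "run P A B r 0 = []"
| "run P A B r (Suc n) =
     (let t = run P A B r n in
      if halts P r t then t
      else t @ [if even (length t) then msgA P A r t else msgB P B r t])"

definition good_run :: "'a protocol \<Rightarrow> 'a list \<Rightarrow> 'a list \<Rightarrow> real \<Rightarrow> real
    \<Rightarrow> (nat \<Rightarrow> bool) \<Rightarrow> (nat \<Rightarrow> bool) \<Rightarrow> bool" where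
  "good_run P A B R M ok r \<longleftrightarrow>
     (\<exists>k. real k \<le> R \<and> halts P r (run P A B r k) \<and>
          real (sum_list (map length (run P A B r k))) \<le> M \<and>
          ok (outp P r (run P A B r k)))"

end

theory Submission
  imports Defs
begin


lemma lcp_ge: "L \<le> LCP A B \<longleftrightarrow> L \<le> length A \<and> L \<le> length B \<and> take L A = take L B"
  unfolding LCP_def
proof (induction A B arbitrary: L rule: longest_common_prefix.induct)
  case (1 x xs y ys)
  then show ?case by (cases L) auto
qed auto

lemma lcp_le: "LCP A B \<le> length A"
  using lcp_ge[of "LCP A B" A B] by simp

definition Lf :: "nat \<Rightarrow> nat" where "Lf i = (if i = 0 then 1 else 2^(2^(i-1)))"

lemma Lf_SS: "Lf (Suc (Suc i)) = Lf (Suc i)^2"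
  by (simp add: Lf_def power_mult[symmetric] mult.commute)

definition out :: "nat \<Rightarrow> nat" where "out i = (if i = 0 then 0 else Lf i - 1)"

lemma out_ok: assumes "n < Lf c" "c > 0 \<Longrightarrow> Lf (c-1) \<le> n"
  shows "n \<le> out c \<and> out c \<le> n^2"
proof (cases c)
  case 0 then show ?thesis using assms by (simp add: out_def Lf_def)
next
  case (Suc d)
  show ?thesis
  proof (cases d)
    case 0 then show ?thesis using assms Suc by (simp add: out_def Lf_def)
  next
    case (Suc e)
    have "Lf c = Lf (Suc e)^2" using Suc \<open>c = Suc d\<close> Lf_SS by simp
    moreover have "Lf (Suc e) \<le> n" using assms Suc \<open>c = Suc d\<close> by simp
    ultimately have "Lf c \<le> n^2" by (simp add: power_mono)
    then show ?thesis using assms \<open>c = Suc d\<close> by (auto simp: out_def)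
  qed
qed


lemma Lf_gt: "i < Lf i"
proof (cases i)
  case (Suc j)
  have "j < 2^j" by (rule less_exp)
  then have "Suc j < 2^(2^j)"
    by (metis Suc_lessI le_less_trans less_exp not_less_eq_eq power_0 power_strict_increasing_iff
        one_less_numeral_iff semiring_norm(76) less_eq_Suc_le)
  then show ?thesis using Suc by (simp add: Lf_def)
qed (simp add: Lf_def)

interpretation C: product_prob_space "\<lambda>_::nat. measure_pmf (bernoulli_pmf (1/2))" UNIV
  by unfold_locales

lemma space_coins[simp]: "space coins = UNIV"
  by (simp add: coins_def space_PiM)

lemma prob_coins: "prob_space coins"
  unfolding coins_def by (rule C.P.prob_space_axioms)

lemma comp_meas: "(\<lambda>r. r a) \<in> measurable coins (count_space UNIV)"
proof -
  have "(\<lambda>r. r a) \<in> measurable coins (measure_pmf (bernoulli_pmf (1/2)))"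
    unfolding coins_def by (rule measurable_component_singleton) simp
  then show ?thesis by (simp add: measurable_cong_sets)
qed

lemma comp_rule: "(\<And>u. (\<lambda>r. F u r) \<in> measurable coins N) \<Longrightarrow> (\<lambda>r. F (r a) r) \<in> measurable coins N"
  by (rule measurable_compose_countable[OF _ comp_meas])

lemma bad_prob:
  assumes "distinct [a,b,c,d]"
  shows "measure coins {r. r a = r b \<and> r c = r d} = 1/4"
proof -
  define J where "J = {a,b,c,d}"
  define X where "X u v = (\<lambda>j. if j = a \<or> j = b then {u} else {v::bool})" for u v
  define B where "B u v = {r \<in> space coins. \<forall>j\<in>J. r j \<in> X u v j}" for u v
  have fin: "finite J" by (simp add: J_def)
  have box: "measure coins (B u v) = 1/16" for u v
  proof -
    have "measure coins (B u v) = (\<Prod>j\<in>J. measure (measure_pmf (bernoulli_pmf (1/2))) (X u v j))"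
      unfolding coins_def B_def using C.emeasure_PiM_Collect[of J "X u v"] fin
      by (simp add: C.P.emeasure_eq_measure measure_pmf.emeasure_eq_measure prod_ennreal measure_nonneg prod_nonneg)
    also have "\<dots> = (\<Prod>j\<in>J. 1/2)"
      by (intro prod.cong) (auto simp: X_def measure_pmf_single)
    also have "\<dots> = 1/16" using assms by (simp add: J_def)
    finally show ?thesis .
  qed
  have mem: "r \<in> B u v \<longleftrightarrow> r a = u \<and> r b = u \<and> r c = v \<and> r d = v" for r u v
    using assms by (auto simp: B_def J_def X_def)
  have eq: "{r. r a = r b \<and> r c = r d} = (B True True \<union> B True False) \<union> (B False True \<union> B False False)"
    by (auto simp: mem)
  interpret prob_space coins by (rule prob_coins)
  have mB: "B u v \<in> sets coins" for u v
    unfolding coins_def B_def by measurable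
  have d1: "B True True \<inter> B True False = {}" "B False True \<inter> B False False = {}"
     "(B True True \<union> B True False) \<inter> (B False True \<union> B False False) = {}"
    by (auto simp: mem)
  have u1: "measure coins (B True True \<union> B True False) = 1/8"
    using finite_measure_Union[OF mB mB d1(1)] box by simp
  have u2: "measure coins (B False True \<union> B False False) = 1/8"
    using finite_measure_Union[OF mB mB d1(2)] box by simp
  show ?thesis unfolding eq
    using finite_measure_Union[OF sets.Un[OF mB mB] sets.Un[OF mB mB] d1(3)] u1 u2 by simp
qed


lemma post_meas: "(g::_\<Rightarrow>'b::countable) \<in> measurable coins (count_space UNIV) \<Longrightarrow> (\<lambda>r. h (g r)) \<in> measurable coins (count_space UNIV)"
  by (rule measurable_compose_countable[where f="\<lambda>i x. h i"]) auto

lemma t1: "(\<lambda>r. [k, r a, r b]) \<in> measurable coins (count_space UNIV)"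
proof -
  have "(\<lambda>r. (\<lambda>u r. [k, u, r b]) (r a) r) \<in> measurable coins (count_space UNIV)"
  proof (rule comp_rule[where F="\<lambda>u r. [k, u, r b]" and a=a])
    fix u
    show "(\<lambda>r. [k, u, r b]) \<in> measurable coins (count_space UNIV)"
      by (rule post_meas[where h="\<lambda>v. [k,u,v]", OF comp_meas])
  qed
  then show ?thesis by simp
qed

lemma t2: "(\<lambda>r. [m!0 \<or> m!1 \<noteq> r a \<or> m!2 \<noteq> r b]) \<in> measurable coins (count_space UNIV)"
proof -
  have "(\<lambda>r. (\<lambda>u r. [m!0 \<or> m!1 \<noteq> u \<or> m!2 \<noteq> r b]) (r a) r) \<in> measurable coins (count_space UNIV)"
  proof (rule comp_rule[where F="\<lambda>u r. [m!0 \<or> m!1 \<noteq> u \<or> m!2 \<noteq> r b]" and a=a])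
    fix u
    show "(\<lambda>r. [m!0 \<or> m!1 \<noteq> u \<or> m!2 \<noteq> r b]) \<in> measurable coins (count_space UNIV)"
      by (rule post_meas[where h="\<lambda>v. [m!0 \<or> m!1 \<noteq> u \<or> m!2 \<noteq> v]", OF comp_meas])
  qed
  then show ?thesis by simp
qed


definition hidx :: "'a::countable list \<Rightarrow> nat \<Rightarrow> nat" where "hidx X j = to_nat (X, j)"

definition aM :: "'a::countable list \<Rightarrow> (nat \<Rightarrow> bool) \<Rightarrow> nat \<Rightarrow> bool list" where
  "aM A r i = [length A < Lf i, r (hidx (take (Lf i) A) 0), r (hidx (take (Lf i) A) 1)]"

definition bbit :: "'a::countable list \<Rightarrow> (nat \<Rightarrow> bool) \<Rightarrow> nat \<Rightarrow> bool list \<Rightarrow> bool" where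
  "bbit B r i m = (m!0 \<or> m!1 \<noteq> r (hidx (take (Lf i) B) 0) \<or> m!2 \<noteq> r (hidx (take (Lf i) B) 1))"

definition P1 :: "'a::countable protocol" where
  "P1 = (| msgA = (\<lambda>A r t. aM A r (length t div 2)),
           msgB = (\<lambda>B r t. [bbit B r (length t div 2) (last t)]),
           halts = (\<lambda>r t. t \<noteq> [] \<and> even (length t) \<and> last t = [True]),
           outp = (\<lambda>r t. out (length t div 2 - 1)) |)"

lemma P1_simps[simp]:
  "msgA P1 A r t = aM A r (length t div 2)"
  "msgB P1 B r t = [bbit B r (length t div 2) (last t)]"
  "halts P1 r t = (t \<noteq> [] \<and> even (length t) \<and> last t = [True])"
  "outp P1 r t = out (length t div 2 - 1)"
  by (simp_all add: P1_def)

lemma P1_pf: "prefix_free_protocol P1"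
  unfolding prefix_free_protocol_def
  by (auto dest!: prefix_length_less simp: aM_def)

lemma P1_meas: "(\<lambda>r. run P1 A B r k) \<in> measurable coins (count_space UNIV)"
proof (induction k)
  case 0 then show ?case by simp
next
  case (Suc k)
  define G where "G t r = (if halts P1 r t then t else t @ [if even (length t) then msgA P1 A r t else msgB P1 B r t])" for t r
  have "(\<lambda>r. G (run P1 A B r k) r) \<in> measurable coins (count_space UNIV)"
  proof (rule measurable_compose_countable[OF _ Suc])
    fix t
    show "(\<lambda>r. G t r) \<in> measurable coins (count_space UNIV)"
    proof (cases "t \<noteq> [] \<and> even (length t) \<and> last t = [True]")
      case True then show ?thesis by (simp add: G_def)
    next
      case False
      show ?thesis
      proof (cases "even (length t)")
        case True
        then have "(\<lambda>r. G t r) = (\<lambda>r. t @ [aM A r (length t div 2)])"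
          using False by (auto simp: G_def)
        then show ?thesis
          by (simp only: aM_def) (rule post_meas[where h="\<lambda>m. t @ [m]", OF t1])
      next
        case F2: False
        then have "(\<lambda>r. G t r) = (\<lambda>r. t @ [[bbit B r (length t div 2) (last t)]])"
          using False by (auto simp: G_def)
        then show ?thesis
          by (simp only: bbit_def) (rule post_meas[where h="\<lambda>m. t @ [m]", OF t2])
      qed
    qed
  qed
  then show ?case by (simp add: G_def Let_def)
qed

lemma P1_sets: "{r. \<exists>k. Q k (run P1 A B r k)} \<in> sets coins"
proof -
  have "{r. \<exists>k. Q k (run P1 A B r k)} = (\<Union>k. (\<lambda>r. run P1 A B r k) -` {t. Q k t} \<inter> space coins)"
    by auto
  also have "\<dots> \<in> sets coins"
  proof -
    have "(\<lambda>r. run P1 A B r k) -` {t. Q k t} \<inter> space coins \<in> sets coins" for k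
      by (rule measurable_sets[OF P1_meas]) simp
    then show ?thesis by blast
  qed
  finally show ?thesis .
qed


definition T :: "'a::countable list \<Rightarrow> (nat\<Rightarrow>bool) \<Rightarrow> nat \<Rightarrow> bool list list" where
  "T A r i = concat (map (\<lambda>j. [aM A r j, [False]]) [0..<i])"

lemma T_0[simp]: "T A r 0 = []"
  by (simp add: T_def)

lemma T_Suc: "T A r (Suc i) = T A r i @ [aM A r i, [False]]"
  by (simp add: T_def)

lemma T_len: "length (T A r i) = 2*i"
  by (induction i) (auto simp: T_Suc)

lemma T_sum: "sum_list (map length (T A r i)) = 4*i"
  by (induction i) (auto simp: T_Suc aM_def)

lemma T_last: "i > 0 \<Longrightarrow> last (T A r i) = [False]"
  by (cases i) (auto simp: T_Suc)

lemma runT: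
  assumes pre: "\<And>j. j < c \<Longrightarrow> \<not> length A < Lf j \<and> take (Lf j) A = take (Lf j) B"
  shows "i \<le> c \<Longrightarrow> run P1 A B r (2*i) = T A r i"
proof (induction i)
  case 0 then show ?case by (simp add: T_def)
next
  case (Suc i)
  then have IH: "run P1 A B r (2*i) = T A r i" and ic: "i < c" by auto
  have nh: "\<not> halts P1 r (T A r i)"
    using T_last[of i A r] by (cases "i = 0") (auto simp: T_def)
  have r1: "run P1 A B r (Suc (2*i)) = T A r i @ [aM A r i]"
    using IH nh by (simp add: T_len Let_def)
  have bb: "\<not> bbit B r i (aM A r i)"
    using pre[OF ic] by (simp add: bbit_def aM_def)
  have "run P1 A B r (Suc (Suc (2*i))) = T A r (Suc i)"
    using r1 bb by (simp add: T_len T_Suc Let_def)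
  then show ?case by simp
qed

lemma run_final:
  assumes pre: "\<And>j. j < c \<Longrightarrow> \<not> length A < Lf j \<and> take (Lf j) A = take (Lf j) B"
    and bb: "bbit B r c (aM A r c)"
  shows "halts P1 r (run P1 A B r (2*c+2)) \<and> outp P1 r (run P1 A B r (2*c+2)) = out c
     \<and> sum_list (map length (run P1 A B r (2*c+2))) = 4*c+4"
proof -
  have IH: "run P1 A B r (2*c) = T A r c" using runT[OF pre] by simp
  have nh: "\<not> halts P1 r (T A r c)"
    using T_last[of c A r] by (cases "c = 0") (auto simp: T_def)
  have r1: "run P1 A B r (Suc (2*c)) = T A r c @ [aM A r c]"
    using IH nh by (simp add: T_len Let_def)
  have r2: "run P1 A B r (Suc (Suc (2*c))) = T A r c @ [aM A r c, [True]]"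
    using r1 bb by (simp add: T_len Let_def)
  show ?thesis using r2 by (simp add: T_len T_sum aM_def)
qed


lemma bad_sets: "{r. r a = r b \<and> r c = r d} \<in> sets coins"
proof -
  have "{r. r a = r b \<and> r c = r d} = {r \<in> space coins. r a = r b \<and> r c = r d}" by simp
  also have "\<dots> \<in> sets coins"
    unfolding coins_def by measurable
  finally show ?thesis .
qed

lemma loglog: assumes "2^(2^m) \<le> (n::nat)" shows "real m < log 2 (log 2 (real n + 4))"
proof -
  have e: "(2::real) powr real k = 2^k" for k by (simp add: powr_realpow)
  have "real (2^(2^m)) < real n + 4" using assms by linarith
  then have "2 powr real (2^m) < real n + 4" using e[of "2^m"] by simp
  then have a: "real (2^m) < log 2 (real n + 4)" by (simp add: less_log_iff)
  then have "2 powr real m < log 2 (real n + 4)" using e[of m] by simp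
  moreover have "0 < log 2 (real n + 4)" using a by (smt (verit) of_nat_0_le_iff)
  ultimately show ?thesis by (simp add: less_log_iff)
qed

lemma loglog_ge1: "1 \<le> log 2 (log 2 (real n + 4))"
proof -
  have "2 \<le> log 2 (real n + 4)"
    by (subst le_log_iff) auto
  then show ?thesis by (subst le_log_iff) auto
qed


lemma part1_AB:
  fixes A B :: "'a::countable list"
  shows "measure coins {r. good_run P1 A B (16 * (1 + log 2 (log 2 (real (LCP A B) + 4))))
                (16 * (1 + log 2 (log 2 (real (LCP A B) + 4))))
                (\<lambda>l'. LCP A B \<le> l' \<and> l' \<le> LCP A B ^ 2) r} \<ge> 3/4"
proof -
  define l where "l = LCP A B"
  define y where "y = log 2 (log 2 (real l + 4))"
  define Q where "Q i = (length A < Lf i \<or> take (Lf i) A \<noteq> take (Lf i) B)" for i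
  define c where "c = (LEAST i. Q i)"
  have Qc: "Q c" unfolding c_def by (rule LeastI[of Q "length A"]) (simp add: Q_def Lf_gt)
  have pre: "\<And>j. j < c \<Longrightarrow> \<not> length A < Lf j \<and> take (Lf j) A = take (Lf j) B"
    using not_less_Least[of _ Q] unfolding c_def Q_def by blast
  have lc: "l < Lf c"
  proof (cases "length A < Lf c")
    case True then show ?thesis using lcp_le[of A B] by (simp add: l_def)
  next
    case False
    then have "take (Lf c) A \<noteq> take (Lf c) B" using Qc by (simp add: Q_def)
    then show ?thesis using lcp_ge[of "Lf c" A B] by (auto simp: l_def)
  qed
  have lc2: "Lf (c-1) \<le> l" if "c > 0"
  proof -
    have h: "\<not> length A < Lf (c-1)" "take (Lf (c-1)) A = take (Lf (c-1)) B"
      using pre[of "c-1"] that by auto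
    then have "length (take (Lf (c-1)) A) = length (take (Lf (c-1)) B)" by simp
    then have "Lf (c-1) \<le> length B" using h(1) by (simp add: min_def split: if_splits)
    then show ?thesis using h lcp_ge[of "Lf (c-1)" A B] by (simp add: l_def)
  qed
  have outc: "l \<le> out c \<and> out c \<le> l^2" using out_ok[OF lc lc2] by blast
  have y1: "1 \<le> y" unfolding y_def by (rule loglog_ge1)
  have cb: "real c < y + 2"
  proof (cases "c \<ge> 2")
    case True
    then have "Lf (c-1) = 2^(2^(c-2))" by (simp add: Lf_def)
    then have "real (c-2) < y" using lc2 True loglog[of "c-2" l] by (simp add: y_def)
    then show ?thesis using True by linarith
  next
    case False then show ?thesis using y1 by linarith
  qed
  have bnd1: "real (2*c+2) \<le> 16 * (1 + y)" using cb y1 by simp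
  have bnd2: "real (4*c+4) \<le> 16 * (1 + y)" using cb y1 by simp
  define S where "S = {r. bbit B r c (aM A r c)}"
  define G where "G = {r. good_run P1 A B (16 * (1 + y)) (16 * (1 + y)) (\<lambda>l'. l \<le> l' \<and> l' \<le> l ^ 2) r}"
  have SG: "S \<subseteq> G"
  proof
    fix r assume "r \<in> S"
    then have bb: "bbit B r c (aM A r c)" by (simp add: S_def)
    note f = run_final[OF pre bb]
    show "r \<in> G" unfolding G_def good_run_def
      apply (rule CollectI, rule exI[of _ "2*c+2"])
      using f bnd1 bnd2 outc by (simp only: of_nat_add of_nat_mult) simp
  qed
  interpret prob_space coins by (rule prob_coins)
  have Gs: "G \<in> sets coins"
    using P1_sets[where A=A and B=B and Q="\<lambda>k t. real k \<le> 16*(1+y) \<and> (t \<noteq> [] \<and> even (length t) \<and> last t = [True])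
       \<and> real (sum_list (map length t)) \<le> 16*(1+y) \<and> l \<le> out (length t div 2 - 1) \<and> out (length t div 2 - 1) \<le> l^2"]
    unfolding G_def good_run_def by simp
  have PS: "measure coins S \<ge> 3/4"
  proof (cases "length A < Lf c")
    case True
    then have "S = space coins" by (auto simp: S_def bbit_def aM_def)
    then show ?thesis using prob_space by simp
  next
    case False
    then have ne: "take (Lf c) A \<noteq> take (Lf c) B" using Qc by (simp add: Q_def)
    define a0 where "a0 = hidx (take (Lf c) A) 0"
    define a1 where "a1 = hidx (take (Lf c) A) 1"
    define b0 where "b0 = hidx (take (Lf c) B) 0"
    define b1 where "b1 = hidx (take (Lf c) B) 1"
    have d: "distinct [a0, b0, a1, b1]" using ne by (simp add: a0_def a1_def b0_def b1_def hidx_def)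
    have "S = space coins - {r. r a0 = r b0 \<and> r a1 = r b1}"
      using False by (auto simp: S_def bbit_def aM_def a0_def a1_def b0_def b1_def)
    then have "measure coins S = 1 - 1/4"
      using prob_compl[OF bad_sets] bad_prob[OF d] by simp
    then show ?thesis by simp
  qed
  have "measure coins S \<le> measure coins G" by (rule finite_measure_mono[OF SG Gs])
  then show ?thesis using PS unfolding G_def y_def l_def by simp
qed


fun nb :: "nat \<Rightarrow> nat" where
  "nb 0 = 0" | "nb (Suc n) = Suc (nb (Suc n div 2))"

lemma nb_lt: "n < 2^(nb n)"
  by (induction n rule: nb.induct) auto

lemma nb_le: "n \<ge> 1 \<Longrightarrow> 2^(nb n) \<le> 2*n"
proof (induction n rule: nb.induct)
  case (2 n)
  show ?case
  proof (cases "Suc n div 2 \<ge> 1")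
    case True then show ?thesis using 2 by simp
  next
    case False then have "n = 0" by simp
    then show ?thesis by simp
  qed
qed simp

fun enc :: "nat \<Rightarrow> nat \<Rightarrow> bool list" where
  "enc 0 n = []" | "enc (Suc d) n = odd n # enc d (n div 2)"

fun dec :: "bool list \<Rightarrow> nat" where
  "dec [] = 0" | "dec (b#bs) = (if b then 1 else 0) + 2 * dec bs"

lemma enc_len[simp]: "length (enc d n) = d"
  by (induction d arbitrary: n) auto

lemma dec_enc: "n < 2^d \<Longrightarrow> dec (enc d n) = n"
proof (induction d arbitrary: n)
  case (Suc d)
  then have "n div 2 < 2^d" by simp
  then show ?case using Suc.IH by simp
qed simp

lemma unary_pf: "\<not> strict_prefix (replicate m True @ [False]) (replicate n True @ [False])"
proof
  assume sp: "strict_prefix (replicate m True @ [False]) (replicate n True @ [False])"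
  then have "m < n" using prefix_length_less by fastforce
  from sp obtain zs where zs: "replicate n True @ [False] = (replicate m True @ [False]) @ zs"
    by (auto simp: strict_prefix_def prefix_def)
  have "(replicate n True @ [False]) ! m = True" using \<open>m < n\<close> by (simp add: nth_append)
  moreover have "((replicate m True @ [False]) @ zs) ! m = False" by (simp add: nth_append)
  ultimately show False using zs by simp
qed

definition kA :: "'a list \<Rightarrow> nat" where "kA A = (LEAST i. length A < Lf i)"

definition P2 :: "'a::countable protocol" where
  "P2 = (| msgA = (\<lambda>A r t. if t = [] then replicate (nb (kA A)) True @ [False]
                             else enc (length (hd t) - 1) (kA A)),
           msgB = (\<lambda>B r t. []),
           halts = (\<lambda>r t. 3 \<le> length t),
           outp = (\<lambda>r t. out (dec (t!2))) |)"

lemma P2_simps[simp]: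
  "msgA P2 A r t = (if t = [] then replicate (nb (kA A)) True @ [False] else enc (length (hd t) - 1) (kA A))"
  "msgB P2 B r t = []"
  "halts P2 r t = (3 \<le> length t)"
  "outp P2 r t = out (dec (t!2))"
  by (simp_all add: P2_def)

lemma P2_pf: "prefix_free_protocol P2"
  unfolding prefix_free_protocol_def
  using unary_pf by (auto dest!: prefix_length_less)

lemma P2_run: "run P2 A B r 3 = [replicate (nb (kA A)) True @ [False], [], enc (nb (kA A)) (kA A)]"
  by (simp add: numeral_3_eq_3 Let_def)


lemma kA_props: "length A < Lf (kA A)" "kA A > 0 \<Longrightarrow> Lf (kA A - 1) \<le> length A"
proof -
  show "length A < Lf (kA A)" unfolding kA_def by (rule LeastI[of _ "length A"]) (rule Lf_gt)
  show "kA A > 0 \<Longrightarrow> Lf (kA A - 1) \<le> length A"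
    using not_less_Least[of "kA A - 1" "\<lambda>i. length A < Lf i"] unfolding kA_def by simp
qed

lemma bits_bound:
  assumes "Lf (k-1) \<le> n" "k > 0"
  shows "real (2 * nb k + 1) \<le> 7 * (1 + log 2 (log 2 (log 2 (real n + 4))))"
proof -
  define x where "x = log 2 (log 2 (real n + 4))"
  have x1: "1 \<le> x" unfolding x_def by (rule loglog_ge1)
  have z0: "0 \<le> log 2 x" using x1 by simp
  show ?thesis
  proof (cases "k \<ge> 2")
    case False
    then have "k = 1" using assms by simp
    then have "real (2 * nb k + 1) = 3" by simp
    then have "real (2 * nb k + 1) \<le> 7 * (1 + log 2 x)" using z0 by (smt (verit))
    then show ?thesis unfolding x_def .
  next
    case True
    then have "Lf (k-1) = 2^(2^(k-2))" by (simp add: Lf_def)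
    then have "real (k-2) < x" using assms loglog[of "k-2" n] by (simp add: x_def)
    then have kx: "real k < x + 2" using True by linarith
    have "real (2^(nb k)) \<le> real (2*k)" using nb_le[of k] assms by (simp only: of_nat_le_iff)
    then have "2 powr real (nb k) \<le> 2 * real k" by (simp add: powr_realpow)
    also have "\<dots> < 6 * x" using kx x1 by linarith
    finally have "real (nb k) < log 2 (6 * x)" using x1 by (simp add: less_log_iff)
    also have "log 2 (6 * x) = log 2 6 + log 2 x" using x1 by (simp add: log_mult)
    finally have "real (nb k) < log 2 6 + log 2 x" .
    moreover have "log 2 6 < 3" by (subst log_less_iff) auto
    ultimately have "real (nb k) < 3 + log 2 x" by linarith
    moreover have e: "real (2 * nb k + 1) = 2 * real (nb k) + 1" by simp
    ultimately have "real (2 * nb k + 1) \<le> 7 * (1 + log 2 x)" using z0 by (smt (verit))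
    then show ?thesis unfolding x_def .
  qed
qed

lemma part2_AB:
  fixes A B :: "'a::countable list"
  shows "measure coins {r. good_run P2 A B 7 (7 * (1 + log 2 (log 2 (log 2 (real (length A) + 4)))))
                (\<lambda>l'. LCP A B \<le> l' \<and> l' \<le> length A ^ 2) r} \<ge> 3/4"
proof -
  define k where "k = kA A"
  define z where "z = log 2 (log 2 (log 2 (real (length A) + 4)))"
  have z0: "0 \<le> z" unfolding z_def using loglog_ge1 by simp
  have o: "length A \<le> out k \<and> out k \<le> length A ^ 2"
    using out_ok[OF kA_props(1) kA_props(2)] by (simp add: k_def)
  have bb: "real (2 * nb k + 1) \<le> 7 * (1 + z)"
  proof (cases "k > 0")
    case True then show ?thesis using bits_bound[of "kA A" "length A"] kA_props(2)[of A]
      unfolding k_def z_def by simp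
  next
    case False then show ?thesis using z0 by simp
  qed
  have "good_run P2 A B 7 (7 * (1 + z)) (\<lambda>l'. LCP A B \<le> l' \<and> l' \<le> length A ^ 2) r" for r
    unfolding good_run_def
    apply (rule exI[of _ 3])
    using bb o lcp_le[of A B] dec_enc[OF nb_lt[of k]] by (simp add: P2_run k_def[symmetric])
  then have "{r. good_run P2 A B 7 (7 * (1 + z)) (\<lambda>l'. LCP A B \<le> l' \<and> l' \<le> length A ^ 2) r} = space coins"
    by auto
  interpret prob_space coins by (rule prob_coins)
  show ?thesis using prob_space \<open>{r. _} = space coins\<close> unfolding z_def by simp
qed

theorem lemma9:
  shows
   "(\<exists>(c::real) (C::real). c > 1/2 \<and>
      (\<exists>P :: 'a::countable protocol. prefix_free_protocol P \<and>
        (\<forall>A B. let l = LCP A B;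
                   bnd = C * (1 + log 2 (log 2 (real l + 4)))
               in measure coins {r. good_run P A B bnd bnd
                                     (\<lambda>l'. l \<le> l' \<and> l' \<le> l ^ 2) r} \<ge> c)))
    \<and>
    (\<exists>(c::real) (C::real). c > 1/2 \<and>
      (\<exists>P :: 'a::countable protocol. prefix_free_protocol P \<and>
        (\<forall>A B. let l = LCP A B
               in measure coins {r. good_run P A B C
                                     (C * (1 + log 2 (log 2 (log 2 (real (length A) + 4)))))
                                     (\<lambda>l'. l \<le> l' \<and> l' \<le> length A ^ 2) r} \<ge> c)))"
proof (intro conjI)
  show "\<exists>(c::real) (C::real). c > 1/2 \<and>
      (\<exists>P :: 'a::countable protocol. prefix_free_protocol P \<and>
        (\<forall>A B. let l = LCP A B;
                   bnd = C * (1 + log 2 (log 2 (real l + 4)))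
               in measure coins {r. good_run P A B bnd bnd
                                     (\<lambda>l'. l \<le> l' \<and> l' \<le> l ^ 2) r} \<ge> c))"
    apply (rule exI[of _ "3/4"], rule exI[of _ 16])
    using P1_pf part1_AB by (auto simp: Let_def)
  show "\<exists>(c::real) (C::real). c > 1/2 \<and>
      (\<exists>P :: 'a::countable protocol. prefix_free_protocol P \<and>
        (\<forall>A B. let l = LCP A B
               in measure coins {r. good_run P A B C
                                     (C * (1 + log 2 (log 2 (log 2 (real (length A) + 4)))))
                                     (\<lambda>l'. l \<le> l' \<and> l' \<le> length A ^ 2) r} \<ge> c))"
    apply (rule exI[of _ "3/4"], rule exI[of _ 7])
    using P2_pf part2_AB by (auto simp: Let_def)
qed

end
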